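(* Let $\Omega\subset\mathbb{R}^d$ be compact with a probability measure $\mu$, let $1\le p<\infty$, let $X_N$ be an $N$-dimensional subspace of $\mathcal{C}(\Omega)$, let $\xi=(\xi^1,\dots,\xi^m)\in\Omega^m$ and let $\mathbf{w}=(w_1,\dots,w_m)$ with $w_j>0$. Suppose that (A1) $C_1\|u\|_{L_p(\Omega,\mu)}\le\|S(u,\xi)\|_{p,\mathbf{w}}$ for all $u\in X_N$, and (A2) $\sum_{\nu=1}^mw_\nu\le C_2$, for some constants $C_1,C_2>0$. Then for any $f\in\mathcal{C}(\Omega)$, $$\|f-\ell p\mathbf{w}(\xi,X_N)(f)\|_{L_p(\Omega,\mu)}\le 2^{1/p}(2C_1^{-1}C_2^{1/p}+1)\,d(f,X_N)_{L_p(\Omega,\mu_{\mathbf{w},\xi})},$$ where $\mu_{\mathbf{w},\xi}=\frac12\mu+\frac1{2\|\mathbf{w}\|_1}\sum_{j=1}^mw_j\delta_{\xi^j}$ and $\|\mathbf{w}\|_1=\sum_{j=1}^mw_j$.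
   Context: $\|S(f,\xi)\|_{p,\mathbf{w}}:=(\sum_{\nu=1}^mw_\nu|f(\xi^\nu)|^p)^{1/p}$. The weighted least squares operator $\ell p\mathbf{w}(\xi,X_N)(f)$ denotes an element $u\in X_N$ minimizing $\|S(f-u,\xi)\|_{p,\mathbf{w}}$. For a probability measure $\nu$, $d(f,X_N)_{L_p(\Omega,\nu)}=\inf_{u\in X_N}\|f-u\|_{L_p(\Omega,\nu)}$. $\delta_x$ is the Dirac measure at $x$. *)

theory Defs
  imports "HOL-Probability.Probability"
begin

definition finite_dim_subspace :: "'a::topological_space set \<Rightarrow> nat \<Rightarrow> ('a \<Rightarrow> real) set \<Rightarrow> bool" where
  "finite_dim_subspace \<Omega> N X \<longleftrightarrow>
     (\<exists>b::nat \<Rightarrow> 'a \<Rightarrow> real.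
        (\<forall>i<N. continuous_on \<Omega> (b i)) \<and>
        (\<forall>c::nat \<Rightarrow> real. (\<forall>x\<in>\<Omega>. (\<Sum>i<N. c i * b i x) = 0) \<longrightarrow> (\<forall>i<N. c i = 0)) \<and>
        X = {(\<lambda>x. \<Sum>i<N. c i * b i x) | c. True})"

text \<open>Discrete weighted norm (sample points indexed by 0..m-1).\<close>
definition disc_norm :: "real \<Rightarrow> (nat \<Rightarrow> real) \<Rightarrow> (nat \<Rightarrow> 'a) \<Rightarrow> nat \<Rightarrow> ('a \<Rightarrow> real) \<Rightarrow> real" where
  "disc_norm p w \<xi> m f = (\<Sum>\<nu><m. w \<nu> * \<bar>f (\<xi> \<nu>)\<bar> powr p) powr (1 / p)"

definition Lp_norm :: "'a measure \<Rightarrow> real \<Rightarrow> ('a \<Rightarrow> real) \<Rightarrow> real" where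
  "Lp_norm M p f = (\<integral>x. \<bar>f x\<bar> powr p \<partial>M) powr (1 / p)"

definition dist_Lp :: "'a measure \<Rightarrow> real \<Rightarrow> ('a \<Rightarrow> real) \<Rightarrow> ('a \<Rightarrow> real) set \<Rightarrow> real" where
  "dist_Lp M p f X = (INF u\<in>X. Lp_norm M p (\<lambda>x. f x - u x))"

definition mu_wxi :: "'a measure \<Rightarrow> nat \<Rightarrow> (nat \<Rightarrow> real) \<Rightarrow> (nat \<Rightarrow> 'a) \<Rightarrow> 'a measure" where
  "mu_wxi \<mu> m w \<xi> = measure_of (space \<mu>) (sets \<mu>)
     (\<lambda>A. ennreal (1/2) * emeasure \<mu> A
          + (\<Sum>j<m. ennreal (w j / (2 * (\<Sum>i<m. w i))) * indicator A (\<xi> j)))"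

definition is_lpw :: "real \<Rightarrow> (nat \<Rightarrow> real) \<Rightarrow> (nat \<Rightarrow> 'a) \<Rightarrow> nat \<Rightarrow> ('a \<Rightarrow> real) set
                      \<Rightarrow> ('a \<Rightarrow> real) \<Rightarrow> ('a \<Rightarrow> real) \<Rightarrow> bool" where
  "is_lpw p w \<xi> m X f u \<longleftrightarrow> u \<in> X \<and>
     (\<forall>v\<in>X. disc_norm p w \<xi> m (\<lambda>x. f x - u x) \<le> disc_norm p w \<xi> m (\<lambda>x. f x - v x))"

end

theory Submission
  imports Defs
begin



lemma powr_conv0:
  fixes X Y t p :: real
  assumes "X \<ge> 0" "Y \<ge> 0" "0 < t" "t < 1" "p \<ge> 1"
  shows "(t*X + (1-t)*Y) powr p \<le> t * X powr p + (1-t) * Y powr p"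
proof (cases "X > 0 \<and> Y > 0")
  case True
  then show ?thesis using convex_onD[OF powr_convex[OF assms(5)], of "1-t" X Y] assms by auto
next
  case False
  have small: "c powr p \<le> c" if "0 \<le> c" "c \<le> 1" for c :: real
    by (metis assms(5) le_less powr_le_one_le powr_nonneg_iff that(1,2))
  show ?thesis
  proof (cases "X = 0")
    case True
    have "((1-t)*Y) powr p = (1-t) powr p * Y powr p" using assms by (simp add: powr_mult)
    also have "\<dots> \<le> (1-t) * Y powr p" using small[of "1-t"] assms by (intro mult_right_mono) auto
    finally show ?thesis using True by simp
  next
    case False
    then have Y: "Y = 0" using \<open>\<not> (X > 0 \<and> Y > 0)\<close> assms by auto
    have "(t*X) powr p = t powr p * X powr p" using assms by (simp add: powr_mult)
    also have "\<dots> \<le> t * X powr p" using small[of "t"] assms by (intro mult_right_mono) auto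
    finally show ?thesis using Y by simp
  qed
qed

lemma scale_id:
  fixes c z p :: real
  assumes "c > 0" "z \<ge> 0"
  shows "c * (z/c) powr p = (1/c) powr (p-1) * z powr p"
proof -
  have "c * (z/c) powr p = c * (z powr p / c powr p)" using assms by (simp add: powr_divide)
  also have "\<dots> = z powr p / c powr (p-1)" using assms by (simp add: powr_diff)
  also have "\<dots> = (1/c) powr (p-1) * z powr p" using assms by (simp add: powr_divide)
  finally show ?thesis .
qed

lemma powr_split:
  fixes x y a b p :: real
  assumes "a > 0" "b > 0" "p \<ge> 1"
  shows "\<bar>x + y\<bar> powr p \<le> ((a+b)/a) powr (p-1) * \<bar>x\<bar> powr p + ((a+b)/b) powr (p-1) * \<bar>y\<bar> powr p"
proof -
  define t where "t = a/(a+b)"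
  have t: "0 < t" "t < 1" "1 - t = b/(a+b)" using assms by (auto simp: t_def field_simps)
  have "\<bar>x+y\<bar> \<le> t*(\<bar>x\<bar>/t) + (1-t)*(\<bar>y\<bar>/(1-t))" using t(1,2) abs_triangle_ineq[of x y] by simp
  then have "\<bar>x+y\<bar> powr p \<le> (t*(\<bar>x\<bar>/t) + (1-t)*(\<bar>y\<bar>/(1-t))) powr p"
    using assms by (intro powr_mono2) auto
  also have "\<dots> \<le> t * (\<bar>x\<bar>/t) powr p + (1-t) * (\<bar>y\<bar>/(1-t)) powr p"
    using t assms by (intro powr_conv0) auto
  also have "t * (\<bar>x\<bar>/t) powr p = (1/t) powr (p-1) * \<bar>x\<bar> powr p"
    using t by (intro scale_id) auto
  also have "(1-t) * (\<bar>y\<bar>/(1-t)) powr p = (1/(1-t)) powr (p-1) * \<bar>y\<bar> powr p"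
    using t by (intro scale_id) auto
  also have "1/t = (a+b)/a" using assms by (simp add: t_def)
  also have "1/(1-t) = (a+b)/b" using assms by (simp add: t(3))
  finally show ?thesis .
qed

lemma ratio_bound:
  fixes a' s A p :: real
  assumes "a' > 0" "s > 0" "A \<ge> 0" "A \<le> a' powr p" "p \<ge> 1"
  shows "(s/a') powr (p-1) * A \<le> s powr (p-1) * a'"
proof -
  have "(s/a') powr (p-1) * A \<le> (s/a') powr (p-1) * a' powr p"
    using assms by (intro mult_left_mono) auto
  also have "\<dots> = s powr (p-1) * (a' powr p / a' powr (p-1))"
    using assms by (simp add: powr_divide)
  also have "a' powr p / a' powr (p-1) = a'"
    using assms by (simp add: powr_diff[symmetric])
  finally show ?thesis .
qed

lemma mink_core:
  fixes A B C p :: real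
  assumes p: "p \<ge> 1" and A: "A \<ge> 0" and B: "B \<ge> 0" and C: "C \<ge> 0"
    and key: "\<And>\<alpha> \<beta>. \<alpha> \<ge> 0 \<Longrightarrow> \<beta> \<ge> 0 \<Longrightarrow>
      (\<forall>x y::real. \<bar>x+y\<bar> powr p \<le> \<alpha>*\<bar>x\<bar> powr p + \<beta>*\<bar>y\<bar> powr p) \<Longrightarrow> C \<le> \<alpha>*A + \<beta>*B"
  shows "C powr (1/p) \<le> A powr (1/p) + B powr (1/p)"
proof (rule field_le_epsilon)
  fix e :: real assume e: "e > 0"
  define a where "a = A powr (1/p)"
  define b where "b = B powr (1/p)"
  define a' where "a' = a + e/2"
  define b' where "b' = b + e/2"
  define s where "s = a' + b'"
  have a0: "a \<ge> 0" "b \<ge> 0" by (auto simp: a_def b_def)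
  have pos: "a' > 0" "b' > 0" "s > 0" using a0 e by (auto simp: a'_def b'_def s_def)
  have Aa: "A = a powr p" using A p by (simp add: a_def powr_powr)
  have Bb: "B = b powr p" using B p by (simp add: b_def powr_powr)
  have Aa': "A \<le> a' powr p" unfolding Aa using a0 e p by (intro powr_mono2) (auto simp: a'_def)
  have Bb': "B \<le> b' powr p" unfolding Bb using a0 e p by (intro powr_mono2) (auto simp: b'_def)
  have "C \<le> (s/a') powr (p-1) * A + (s/b') powr (p-1) * B"
    by (rule key) (use powr_split[OF pos(1,2) p] in \<open>auto simp: s_def\<close>)
  also have "\<dots> \<le> s powr (p-1) * a' + s powr (p-1) * b'"
    using ratio_bound[OF pos(1) pos(3) A Aa' p] ratio_bound[OF pos(2) pos(3) B Bb' p] by linarith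
  also have "\<dots> = s powr p"
  proof -
    have "s powr (p-1) * a' + s powr (p-1) * b' = s powr (p-1) * s powr 1"
      using pos by (simp add: s_def distrib_left)
    also have "\<dots> = s powr p" by (simp only: powr_add[symmetric]) simp
    finally show ?thesis .
  qed
  finally have "C \<le> s powr p" .
  then have "C powr (1/p) \<le> (s powr p) powr (1/p)" using C p by (intro powr_mono2) auto
  also have "\<dots> = s" using pos p by (simp add: powr_powr)
  finally show "C powr (1/p) \<le> A powr (1/p) + B powr (1/p) + e"
    by (simp add: s_def a'_def b'_def a_def b_def)
qed



lemma nu_ca:
  fixes M :: "'a measure" and c :: "nat \<Rightarrow> real" and \<xi> :: "nat \<Rightarrow> 'a" and m :: nat
  shows "countably_additive (sets M) (\<lambda>A. ennreal (1/2) * emeasure M A + (\<Sum>j<m. ennreal (c j) * indicator A (\<xi> j)))"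
  unfolding countably_additive_def
proof (intro allI impI)
  fix A :: "nat \<Rightarrow> 'a set"
  assume r: "range A \<subseteq> sets M" and d: "disjoint_family A" and u: "\<Union> (range A) \<in> sets M"
  have "(\<Sum>i. ennreal (1/2) * emeasure M (A i) + (\<Sum>j<m. ennreal (c j) * indicator (A i) (\<xi> j)))
     = (\<Sum>i. ennreal (1/2) * emeasure M (A i)) + (\<Sum>i. (\<Sum>j<m. ennreal (c j) * indicator (A i) (\<xi> j)))"
    by (rule suminf_add[symmetric]) (auto intro: summableI)
  also have "(\<Sum>i. ennreal (1/2) * emeasure M (A i)) = ennreal (1/2) * emeasure M (\<Union>i. A i)"
    using suminf_emeasure[OF r d] by simp
  also have "(\<Sum>i. (\<Sum>j<m. ennreal (c j) * indicator (A i) (\<xi> j))) = (\<Sum>j<m. (\<Sum>i. ennreal (c j) * indicator (A i) (\<xi> j)))"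
    by (rule suminf_sum) (auto intro: summableI)
  also have "\<dots> = (\<Sum>j<m. ennreal (c j) * indicator (\<Union>i. A i) (\<xi> j))"
    using suminf_indicator[OF d] by simp
  finally show "(\<Sum>i. ennreal (1/2) * emeasure M (A i) + (\<Sum>j<m. ennreal (c j) * indicator (A i) (\<xi> j)))
     = ennreal (1/2) * emeasure M (\<Union> (range A)) + (\<Sum>j<m. ennreal (c j) * indicator (\<Union> (range A)) (\<xi> j))" .
qed

lemma nu_emeasure:
  fixes M :: "'a measure" and c :: "nat \<Rightarrow> real" and \<xi> :: "nat \<Rightarrow> 'a" and m :: nat
  assumes "A \<in> sets M"
  shows "emeasure (measure_of (space M) (sets M) (\<lambda>A. ennreal (1/2) * emeasure M A + (\<Sum>j<m. ennreal (c j) * indicator A (\<xi> j)))) A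
     = ennreal (1/2) * emeasure M A + (\<Sum>j<m. ennreal (c j) * indicator A (\<xi> j))"
  by (rule emeasure_measure_of_sigma[OF sets.sigma_algebra_axioms _ nu_ca assms]) (auto simp: positive_def)

lemma nu_sets:
  "sets (measure_of (space M) (sets M) F) = sets M" "space (measure_of (space M) (sets M) F) = space M"
  by (auto simp: sets_measure_of[OF sets.space_closed])

lemma two_half_ennreal: "(2::ennreal) * ennreal (1/2) = 1"
  by (metis divide_ennreal_def divide_self ennreal_1 ennreal_divide_numeral
    ennreal_half ennreal_numeral zero_le_numeral zero_neq_numeral)

lemma nu_ge_mu:
  fixes M :: "'a measure" and c :: "nat \<Rightarrow> real" and \<xi> :: "nat \<Rightarrow> 'a" and m :: nat
  defines "\<nu> \<equiv> measure_of (space M) (sets M) (\<lambda>A. ennreal (1/2) * emeasure M A + (\<Sum>j<m. ennreal (c j) * indicator A (\<xi> j)))"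
  assumes H: "H \<in> borel_measurable M"
  shows "nn_integral M H \<le> 2 * nn_integral \<nu> H"
proof -
  have le: "M \<le> scale_measure 2 \<nu>"
  proof -
    have "emeasure M A \<le> emeasure (scale_measure 2 \<nu>) A" for A
    proof (cases "A \<in> sets M")
      case True
      have "emeasure M A = 2 * (ennreal (1/2) * emeasure M A)"
        by (simp only: mult.assoc[symmetric] two_half_ennreal mult_1)
      also have "\<dots> \<le> 2 * (ennreal (1/2) * emeasure M A + (\<Sum>j<m. ennreal (c j) * indicator A (\<xi> j)))"
        by (intro mult_left_mono) auto
      finally show ?thesis unfolding emeasure_scale_measure \<nu>_def nu_emeasure[OF True] .
    next
      case False
      then show ?thesis by (simp add: emeasure_notin_sets)
    qed
    then show ?thesis
      by (simp add: le_measure_iff space_scale_measure \<nu>_def nu_sets le_fun_def)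
  qed
  have "nn_integral M H \<le> nn_integral (scale_measure 2 \<nu>) H"
    by (rule nn_integral_mono_measure[OF _ le]) (simp add: \<nu>_def nu_sets)
  also have "\<dots> = 2 * nn_integral \<nu> H"
    by (rule nn_integral_scale_measure) (use H in \<open>simp add: \<nu>_def nu_sets cong: measurable_cong_sets\<close>)
  finally show ?thesis .
qed

lemma nu_ge_disc:
  fixes M :: "'a measure" and c w :: "nat \<Rightarrow> real" and \<xi> :: "nat \<Rightarrow> 'a" and K :: real and m :: nat
  defines "\<nu> \<equiv> measure_of (space M) (sets M) (\<lambda>A. ennreal (1/2) * emeasure M A + (\<Sum>j<m. ennreal (c j) * indicator A (\<xi> j)))"
  assumes H: "H \<in> borel_measurable M" and K: "K > 0" and c: "\<forall>j<m. c j = w j / K"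
    and w: "\<forall>j<m. w j \<ge> 0" and xi: "\<forall>j<m. \<xi> j \<in> space M"
  shows "(\<Sum>j<m. ennreal (w j) * H (\<xi> j)) \<le> ennreal K * nn_integral \<nu> H"
proof -
  define P where "P = point_measure {..<m} (\<lambda>j. ennreal (w j))"
  define D where "D = distr P M \<xi>"
  have meas: "\<xi> \<in> measurable P M"
    unfolding P_def point_measure_def using xi by (simp add: Pi_iff)
  have sD: "sets D = sets M" by (simp add: D_def)
  have le: "D \<le> scale_measure K \<nu>"
  proof -
    have "emeasure D A \<le> emeasure (scale_measure K \<nu>) A" for A
    proof (cases "A \<in> sets M")
      case True
      have "emeasure D A = emeasure P (\<xi> -` A \<inter> space P)"
        unfolding D_def using True meas by (simp add: emeasure_distr)
      also have "space P = {..<m}" by (simp add: P_def space_point_measure)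
      also have "emeasure P (\<xi> -` A \<inter> {..<m}) = (\<Sum>j\<in>\<xi> -` A \<inter> {..<m}. ennreal (w j))"
        unfolding P_def by (rule emeasure_point_measure_finite) auto
      also have "\<dots> = (\<Sum>j<m. ennreal (w j) * indicator A (\<xi> j))"
        by (rule sum.mono_neutral_cong_left) (auto simp: indicator_def)
      also have "\<dots> = (\<Sum>j<m. ennreal K * (ennreal (c j) * indicator A (\<xi> j)))"
        using c K w by (intro sum.cong) (auto simp: mult.assoc[symmetric] ennreal_mult[symmetric])
      also have "\<dots> = ennreal K * (\<Sum>j<m. ennreal (c j) * indicator A (\<xi> j))"
        by (rule sum_distrib_left[symmetric])
      also have "\<dots> \<le> ennreal K * (ennreal (1/2) * emeasure M A + (\<Sum>j<m. ennreal (c j) * indicator A (\<xi> j)))"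
        by (intro mult_left_mono) auto
      finally show ?thesis unfolding emeasure_scale_measure \<nu>_def nu_emeasure[OF True] .
    next
      case False
      then show ?thesis by (simp add: emeasure_notin_sets sD[symmetric])
    qed
    then show ?thesis
      using sD sets_eq_imp_space_eq[OF sD]
      by (simp add: le_measure_iff space_scale_measure \<nu>_def nu_sets le_fun_def)
  qed
  have "(\<Sum>j<m. ennreal (w j) * H (\<xi> j)) = nn_integral D H"
    unfolding D_def using meas H
    by (simp add: nn_integral_distr P_def nn_integral_point_measure_finite)
  also have "\<dots> \<le> nn_integral (scale_measure K \<nu>) H"
    by (rule nn_integral_mono_measure[OF _ le]) (simp add: \<nu>_def nu_sets sD)
  also have "\<dots> = ennreal K * nn_integral \<nu> H"
    by (rule nn_integral_scale_measure) (use H in \<open>simp add: \<nu>_def nu_sets cong: measurable_cong_sets\<close>)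
  finally show ?thesis .
qed


lemma mink_int:
  fixes M :: "'a measure" and F G :: "'a \<Rightarrow> real"
  assumes p: "1 \<le> p" and iF: "integrable M (\<lambda>x. \<bar>F x\<bar> powr p)" and iG: "integrable M (\<lambda>x. \<bar>G x\<bar> powr p)"
    and iFG: "integrable M (\<lambda>x. \<bar>F x + G x\<bar> powr p)"
  shows "Lp_norm M p (\<lambda>x. F x + G x) \<le> Lp_norm M p F + Lp_norm M p G"
  unfolding Lp_norm_def
proof (rule mink_core[OF p])
  fix \<alpha> \<beta> :: real
  assume a: "\<alpha> \<ge> 0" "\<beta> \<ge> 0" and pt: "\<forall>x y::real. \<bar>x+y\<bar> powr p \<le> \<alpha>*\<bar>x\<bar> powr p + \<beta>*\<bar>y\<bar> powr p"
  have "(\<integral>x. \<bar>F x + G x\<bar> powr p \<partial>M) \<le> (\<integral>x. \<alpha>*\<bar>F x\<bar> powr p + \<beta>*\<bar>G x\<bar> powr p \<partial>M)"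
    using pt iF iG iFG by (intro integral_mono) auto
  also have "\<dots> = \<alpha> * (\<integral>x. \<bar>F x\<bar> powr p \<partial>M) + \<beta> * (\<integral>x. \<bar>G x\<bar> powr p \<partial>M)"
    using iF iG by simp
  finally show "(\<integral>x. \<bar>F x + G x\<bar> powr p \<partial>M) \<le> \<alpha> * (\<integral>x. \<bar>F x\<bar> powr p \<partial>M) + \<beta> * (\<integral>x. \<bar>G x\<bar> powr p \<partial>M)" .
qed (auto intro: integral_nonneg_AE)

lemma mink_disc:
  fixes F G :: "'a \<Rightarrow> real"
  assumes p: "1 \<le> p" and w: "\<forall>j<m. w j \<ge> 0"
  shows "disc_norm p w \<xi> m (\<lambda>x. F x + G x) \<le> disc_norm p w \<xi> m F + disc_norm p w \<xi> m G"
  unfolding disc_norm_def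
proof (rule mink_core[OF p])
  fix \<alpha> \<beta> :: real
  assume a: "\<alpha> \<ge> 0" "\<beta> \<ge> 0" and pt: "\<forall>x y::real. \<bar>x+y\<bar> powr p \<le> \<alpha>*\<bar>x\<bar> powr p + \<beta>*\<bar>y\<bar> powr p"
  have "(\<Sum>\<nu><m. w \<nu> * \<bar>F (\<xi> \<nu>) + G (\<xi> \<nu>)\<bar> powr p) \<le> (\<Sum>\<nu><m. w \<nu> * (\<alpha>*\<bar>F (\<xi> \<nu>)\<bar> powr p + \<beta>*\<bar>G (\<xi> \<nu>)\<bar> powr p))"
    using pt w by (intro sum_mono mult_left_mono) auto
  also have "\<dots> = \<alpha> * (\<Sum>\<nu><m. w \<nu> * \<bar>F (\<xi> \<nu>)\<bar> powr p) + \<beta> * (\<Sum>\<nu><m. w \<nu> * \<bar>G (\<xi> \<nu>)\<bar> powr p)"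
    by (simp add: sum_distrib_left sum.distrib algebra_simps)
  finally show "(\<Sum>\<nu><m. w \<nu> * \<bar>F (\<xi> \<nu>) + G (\<xi> \<nu>)\<bar> powr p) \<le> \<alpha> * (\<Sum>\<nu><m. w \<nu> * \<bar>F (\<xi> \<nu>)\<bar> powr p) + \<beta> * (\<Sum>\<nu><m. w \<nu> * \<bar>G (\<xi> \<nu>)\<bar> powr p)" .
qed (use w in \<open>auto intro!: sum_nonneg\<close>)

lemma int_bnd:
  fixes M :: "'a measure" and g :: "'a \<Rightarrow> real"
  assumes "finite_measure M" "g \<in> borel_measurable M" "\<forall>x\<in>space M. \<bar>g x\<bar> \<le> B" "p \<ge> 1"
  shows "integrable M (\<lambda>x. \<bar>g x\<bar> powr p)"
proof (rule finite_measure.integrable_const_bound[OF assms(1), where B="B powr p"])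
  show "AE x in M. norm (\<bar>g x\<bar> powr p) \<le> B powr p"
    using assms(3,4) by (intro AE_I2) (auto intro: powr_mono2)
qed (use assms(2) in measurable)

lemma nu_finite:
  fixes M :: "'a measure" and c :: "nat \<Rightarrow> real" and \<xi> :: "nat \<Rightarrow> 'a" and m :: nat
  assumes "finite_measure M"
  shows "finite_measure (measure_of (space M) (sets M) (\<lambda>A. ennreal (1/2) * emeasure M A + (\<Sum>j<m. ennreal (c j) * indicator A (\<xi> j))))"
proof (rule finite_measureI)
  have "emeasure M (space M) \<noteq> \<infinity>" using finite_measure.emeasure_finite[OF assms] by (simp add: infinity_ennreal_def)
  then show "emeasure (measure_of (space M) (sets M) (\<lambda>A. ennreal (1/2) * emeasure M A + (\<Sum>j<m. ennreal (c j) * indicator A (\<xi> j))))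
    (space (measure_of (space M) (sets M) (\<lambda>A. ennreal (1/2) * emeasure M A + (\<Sum>j<m. ennreal (c j) * indicator A (\<xi> j))))) \<noteq> \<infinity>"
    unfolding nu_sets nu_emeasure[OF sets.top] by (simp add: ennreal_mult_eq_top_iff)
qed

theorem theorem2p1:
  fixes \<Omega> :: "'a::euclidean_space set" and \<mu> :: "'a measure" and p :: real
    and N m :: nat and X :: "('a \<Rightarrow> real) set" and \<xi> :: "nat \<Rightarrow> 'a" and w :: "nat \<Rightarrow> real"
    and C1 C2 :: real and f u :: "'a \<Rightarrow> real"
  assumes "compact \<Omega>"
    and "prob_space \<mu>"
    and "sets \<mu> = sets (restrict_space borel \<Omega>)"
    and "1 \<le> p"
    and "finite_dim_subspace \<Omega> N X"
    and "\<forall>j<m. \<xi> j \<in> \<Omega>"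
    and "\<forall>j<m. w j > 0"
    and "C1 > 0" and "C2 > 0"
    and A1: "\<forall>v\<in>X. C1 * Lp_norm \<mu> p v \<le> disc_norm p w \<xi> m v"
    and A2: "(\<Sum>\<nu><m. w \<nu>) \<le> C2"
    and "continuous_on \<Omega> f"
    and "is_lpw p w \<xi> m X f u"
  shows "Lp_norm \<mu> p (\<lambda>x. f x - u x)
         \<le> 2 powr (1 / p) * (2 / C1 * C2 powr (1 / p) + 1) * dist_Lp (mu_wxi \<mu> m w \<xi>) p f X"
proof -
  have p: "1 \<le> p" by fact
  have sp: "space \<mu> = \<Omega>" using sets_eq_imp_space_eq[OF assms(3)] by (simp add: space_restrict_space)
  have fm: "finite_measure \<mu>" using assms(2) unfolding prob_space_def by blast
  have meas: "g \<in> borel_measurable \<mu>" if "continuous_on \<Omega> g" for g :: "'a \<Rightarrow> real"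
    using borel_measurable_continuous_on_restrict[OF that] measurable_cong_sets[OF assms(3) refl] by blast
  have bnd: "\<exists>B. \<forall>x\<in>\<Omega>. \<bar>g x\<bar> \<le> B" if "continuous_on \<Omega> g" for g :: "'a \<Rightarrow> real"
  proof -
    have "bounded (g ` \<Omega>)" using compact_continuous_image[OF that assms(1)] compact_imp_bounded by blast
    then show ?thesis unfolding bounded_iff by auto
  qed
  have intm: "integrable \<mu> (\<lambda>x. \<bar>g x\<bar> powr p)" if gcont: "continuous_on \<Omega> g" for g :: "'a \<Rightarrow> real"
  proof -
    obtain B where "\<forall>x\<in>\<Omega>. \<bar>g x\<bar> \<le> B" using bnd[OF gcont] by blast
    then show ?thesis using int_bnd[OF fm meas[OF gcont] _ p] sp by auto
  qed
  obtain b where bc: "\<forall>i<N. continuous_on \<Omega> (b i)"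
    and Xeq: "X = {(\<lambda>x. \<Sum>i<N. c i * b i x) | c. True}"
    using assms(5) unfolding finite_dim_subspace_def by blast
  have XC: "continuous_on \<Omega> v" if "v \<in> X" for v
    using that bc unfolding Xeq by (auto intro!: continuous_intros)
  have Xsub: "(\<lambda>x. v x - v' x) \<in> X" if vv: "v \<in> X" "v' \<in> X" for v v'
  proof -
    obtain c c' where "v = (\<lambda>x. \<Sum>i<N. c i * b i x)" "v' = (\<lambda>x. \<Sum>i<N. c' i * b i x)"
      using vv unfolding Xeq by blast
    then have "(\<lambda>x. v x - v' x) = (\<lambda>x. \<Sum>i<N. (c i - c' i) * b i x)"
      by (auto simp: sum_subtractf[symmetric] left_diff_distrib)
    then show ?thesis unfolding Xeq by (intro CollectI exI[of _ "\<lambda>i. c i - c' i"]) simp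
  qed
  have X0: "X \<noteq> {}" unfolding Xeq by blast
  define W where "W = (\<Sum>\<nu><m. w \<nu>)"
  define \<nu> where "\<nu> = mu_wxi \<mu> m w \<xi>"
  have \<nu>def: "\<nu> = measure_of (space \<mu>) (sets \<mu>) (\<lambda>A. ennreal (1/2) * emeasure \<mu> A
          + (\<Sum>j<m. ennreal (w j / (2 * W)) * indicator A (\<xi> j)))"
    by (simp add: \<nu>_def mu_wxi_def W_def)
  have s\<nu>: "sets \<nu> = sets \<mu>" and sp\<nu>: "space \<nu> = \<Omega>" unfolding \<nu>def nu_sets using sp by auto
  have f\<nu>: "finite_measure \<nu>" unfolding \<nu>def by (rule nu_finite[OF fm])
  have meas\<nu>: "g \<in> borel_measurable \<nu>" if "continuous_on \<Omega> g" for g :: "'a \<Rightarrow> real"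
    using meas[OF that] measurable_cong_sets[OF s\<nu> refl] by blast
  have int\<nu>: "integrable \<nu> (\<lambda>x. \<bar>g x\<bar> powr p)" if gcont: "continuous_on \<Omega> g" for g :: "'a \<Rightarrow> real"
  proof -
    obtain B where "\<forall>x\<in>\<Omega>. \<bar>g x\<bar> \<le> B" using bnd[OF gcont] by blast
    then show ?thesis using int_bnd[OF f\<nu> meas\<nu>[OF gcont] _ p] sp\<nu> by auto
  qed
  define K where "K = 2 powr (1 / p) * (2 / C1 * C2 powr (1 / p) + 1)"
  have Kpos: "K > 0" unfolding K_def using assms(8,9) by (auto intro!: mult_pos_pos add_pos_nonneg)
  have uX: "u \<in> X" and lpw: "\<forall>v\<in>X. disc_norm p w \<xi> m (\<lambda>x. f x - u x) \<le> disc_norm p w \<xi> m (\<lambda>x. f x - v x)"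
    using assms(13) unfolding is_lpw_def by auto
  have w0: "\<forall>j<m. w j \<ge> 0" using assms(7) by (auto intro: less_imp_le)
  have main: "Lp_norm \<mu> p (\<lambda>x. f x - u x) \<le> K * Lp_norm \<nu> p (\<lambda>x. f x - v x)" if vX: "v \<in> X" for v
  proof -
    define g where "g = (\<lambda>x. f x - v x)"
    have gc: "continuous_on \<Omega> g" unfolding g_def using XC[OF vX] assms(12) by (auto intro!: continuous_intros)
    have uc: "continuous_on \<Omega> u" using XC[OF uX] .
    have vc: "continuous_on \<Omega> v" using XC[OF vX] .
    have step1: "Lp_norm \<mu> p (\<lambda>x. f x - u x) \<le> Lp_norm \<mu> p g + Lp_norm \<mu> p (\<lambda>x. v x - u x)"
    proof -
      have e: "(\<lambda>x. g x + (v x - u x)) = (\<lambda>x. f x - u x)" by (auto simp: g_def)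
      have i2: "integrable \<mu> (\<lambda>x. \<bar>v x - u x\<bar> powr p)"
        using uc vc by (intro intm) (auto intro!: continuous_intros)
      have i3: "integrable \<mu> (\<lambda>x. \<bar>g x + (v x - u x)\<bar> powr p)"
        using uc vc gc by (intro intm) (auto intro!: continuous_intros)
      show ?thesis
        using mink_int[OF p intm[OF gc] i2 i3] unfolding e .
    qed
    have step2: "C1 * Lp_norm \<mu> p (\<lambda>x. v x - u x) \<le> disc_norm p w \<xi> m (\<lambda>x. v x - u x)"
      using A1 Xsub[OF vX uX] by blast
    have step3: "disc_norm p w \<xi> m (\<lambda>x. v x - u x) \<le> disc_norm p w \<xi> m (\<lambda>x. v x - f x) + disc_norm p w \<xi> m (\<lambda>x. f x - u x)"
      using mink_disc[OF p w0, of \<xi> "\<lambda>x. v x - f x" "\<lambda>x. f x - u x"] by simp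
    have step3': "disc_norm p w \<xi> m (\<lambda>x. v x - f x) = disc_norm p w \<xi> m g"
      unfolding disc_norm_def g_def by (simp add: abs_minus_commute)
    have step4: "disc_norm p w \<xi> m (\<lambda>x. f x - u x) \<le> disc_norm p w \<xi> m g"
      using lpw vX unfolding g_def by blast
    have vu: "Lp_norm \<mu> p (\<lambda>x. v x - u x) \<le> 2 / C1 * disc_norm p w \<xi> m g"
      using step2 step3 step3' step4 assms(8) by (simp add: field_simps)
    define h where "h = (\<lambda>x. \<bar>g x\<bar> powr p)"
    define I\<mu> where "I\<mu> = integral\<^sup>L \<mu> h"
    define I\<nu> where "I\<nu> = integral\<^sup>L \<nu> h"
    define S where "S = (\<Sum>j<m. w j * h (\<xi> j))"
    have h0: "\<And>x. h x \<ge> 0" by (simp add: h_def)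
    have I\<nu>0: "I\<nu> \<ge> 0" unfolding I\<nu>_def using h0 by (simp add: integral_nonneg_AE)
    have I\<mu>0: "I\<mu> \<ge> 0" unfolding I\<mu>_def using h0 by (simp add: integral_nonneg_AE)
    have S0: "S \<ge> 0" unfolding S_def using h0 w0 by (auto intro!: sum_nonneg)
    have hm: "(\<lambda>x. ennreal (h x)) \<in> borel_measurable \<mu>" unfolding h_def using meas[OF gc] by measurable
    have nn\<mu>: "nn_integral \<mu> (\<lambda>x. ennreal (h x)) = ennreal I\<mu>"
      unfolding I\<mu>_def using intm[OF gc] h0 by (intro nn_integral_eq_integral) (auto simp: h_def)
    have nn\<nu>: "nn_integral \<nu> (\<lambda>x. ennreal (h x)) = ennreal I\<nu>"
      unfolding I\<nu>_def using int\<nu>[OF gc] h0 by (intro nn_integral_eq_integral) (auto simp: h_def)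
    have a: "I\<mu> \<le> 2 * I\<nu>"
    proof -
      have "ennreal I\<mu> \<le> 2 * ennreal I\<nu>"
        using nu_ge_mu[OF hm, where m=m and c="\<lambda>j. w j / (2 * W)" and \<xi>=\<xi>] nn\<mu> nn\<nu> unfolding \<nu>def by simp
      also have "2 * ennreal I\<nu> = ennreal (2 * I\<nu>)" by (simp add: ennreal_mult')
      finally show ?thesis using I\<nu>0 by (simp add: ennreal_le_iff)
    qed
    have b: "S \<le> 2 * C2 * I\<nu>"
    proof (cases "m = 0")
      case True
      then show ?thesis using S_def I\<nu>0 assms(9) by simp
    next
      case False
      then have Wpos: "W > 0" unfolding W_def using assms(7) by (intro sum_pos) auto
      have "ennreal S = (\<Sum>j<m. ennreal (w j) * ennreal (h (\<xi> j)))"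
      proof -
        have "(\<Sum>j<m. ennreal (w j) * ennreal (h (\<xi> j))) = (\<Sum>j<m. ennreal (w j * h (\<xi> j)))"
          using w0 h0 by (intro sum.cong) (auto simp: ennreal_mult)
        also have "\<dots> = ennreal S" unfolding S_def using w0 h0 by (intro sum_ennreal) auto
        finally show ?thesis ..
      qed
      also have "\<dots> \<le> ennreal (2 * W) * ennreal I\<nu>"
        using nu_ge_disc[OF hm, where K="2 * W" and m=m and c="\<lambda>j. w j / (2 * W)" and w=w and \<xi>=\<xi>] Wpos w0 assms(6) sp nn\<nu>
        unfolding \<nu>def by simp
      also have "\<dots> = ennreal (2 * W * I\<nu>)" using Wpos I\<nu>0 by (simp add: ennreal_mult)
      finally have "S \<le> 2 * W * I\<nu>" using Wpos I\<nu>0 by (simp add: ennreal_le_iff)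
      also have "\<dots> \<le> 2 * C2 * I\<nu>" using A2 I\<nu>0 unfolding W_def by (intro mult_right_mono) auto
      finally show ?thesis .
    qed
    define R where "R = Lp_norm \<nu> p g"
    have R0: "R \<ge> 0" unfolding R_def Lp_norm_def by simp
    have Lg: "Lp_norm \<mu> p g \<le> 2 powr (1/p) * R"
    proof -
      have "Lp_norm \<mu> p g = I\<mu> powr (1/p)" unfolding Lp_norm_def I\<mu>_def h_def ..
      also have "\<dots> \<le> (2 * I\<nu>) powr (1/p)" using a I\<mu>0 p by (intro powr_mono2) auto
      also have "\<dots> = 2 powr (1/p) * R" unfolding R_def Lp_norm_def I\<nu>_def h_def
        using I\<nu>0 by (simp add: powr_mult I\<nu>_def h_def)
      finally show ?thesis .
    qed
    have Dg: "disc_norm p w \<xi> m g \<le> 2 powr (1/p) * C2 powr (1/p) * R"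
    proof -
      have "disc_norm p w \<xi> m g = S powr (1/p)" unfolding disc_norm_def S_def h_def ..
      also have "\<dots> \<le> (2 * C2 * I\<nu>) powr (1/p)" using b S0 p by (intro powr_mono2) auto
      also have "\<dots> = 2 powr (1/p) * C2 powr (1/p) * R" unfolding R_def Lp_norm_def
        using I\<nu>0 assms(9) by (simp add: powr_mult I\<nu>_def h_def)
      finally show ?thesis .
    qed
    have "Lp_norm \<mu> p (\<lambda>x. f x - u x) \<le> 2 powr (1/p) * R + 2 / C1 * (2 powr (1/p) * C2 powr (1/p) * R)"
    proof -
      have "2 / C1 * disc_norm p w \<xi> m g \<le> 2 / C1 * (2 powr (1/p) * C2 powr (1/p) * R)"
        using Dg assms(8) by (intro mult_left_mono) auto
      then show ?thesis using step1 vu Lg by linarith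
    qed
    also have "\<dots> = K * R" unfolding K_def by (simp add: algebra_simps)
    finally show ?thesis unfolding R_def g_def .
  qed
  have "Lp_norm \<mu> p (\<lambda>x. f x - u x) / K \<le> dist_Lp \<nu> p f X"
    unfolding dist_Lp_def
    by (rule cINF_greatest[OF X0]) (use main Kpos in \<open>auto simp: pos_divide_le_eq mult.commute\<close>)
  then show ?thesis using Kpos unfolding K_def \<nu>_def by (simp add: pos_divide_le_eq mult.commute)
qed

end
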